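(* (Ennaoui–Selberg identity.) Let $f$ be an L-additive arithmetic function whose associated completely multiplicative function $h_f$ is nonzero-valued, and let $\Lambda_f$ be its generalized von Mangoldt function. Then for every integer $n>1$, $$\frac{\Lambda_f(n)f(n)}{h_f(n)}+\sum_{d\mid n}\Lambda_f(d)\Lambda_f\!\left(\frac{n}{d}\right)=\sum_{d\mid n}\mu\!\left(\frac{n}{d}\right)\frac{f^2(d)}{h_f^2(d)},$$ i.e. $\frac{f\Lambda_f}{h_f}+\Lambda_f\ast\Lambda_f=\mu\ast\left(\frac{f}{h_f}\right)^2$.
   Context: An arithmetic function $f:\mathbb{N}\to\mathbb{C}$ is L-additive if there is a completely multiplicative function $h_f$ such that $f(mn)=f(m)h_f(n)+f(n)h_f(m)$ for all positive integers $m,n$; such an $h_f$ is fixed. $\Lambda_f(n)=\frac{f(p)}{h_f(p)}$ if $n=p^k$ for some prime $p$ and integer $k\geq1$, and $0$ otherwise. $\mu$ is the Möbius function and $\ast$ is Dirichlet convolution; products and quotients of arithmetic functions are pointwise. *)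

theory Defs
  imports "HOL-Number_Theory.Number_Theory" "HOL-Computational_Algebra.Squarefree"
begin

definition completely_multiplicative :: "(nat \<Rightarrow> complex) \<Rightarrow> bool" where
  "completely_multiplicative h \<longleftrightarrow>
     h 1 = 1 \<and> (\<forall>m n. m > 0 \<longrightarrow> n > 0 \<longrightarrow> h (m * n) = h m * h n)"

definition L_additive_wrt :: "(nat \<Rightarrow> complex) \<Rightarrow> (nat \<Rightarrow> complex) \<Rightarrow> bool" where
  "L_additive_wrt f h \<longleftrightarrow> completely_multiplicative h \<and>
     (\<forall>m n. m > 0 \<longrightarrow> n > 0 \<longrightarrow> f (m * n) = f m * h n + f n * h m)"

definition gen_mangoldt :: "(nat \<Rightarrow> complex) \<Rightarrow> (nat \<Rightarrow> complex) \<Rightarrow> nat \<Rightarrow> complex" where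
  "gen_mangoldt f h n =
     (if primepow n then f (aprimedivisor n) / h (aprimedivisor n) else 0)"

definition moebius_mu :: "nat \<Rightarrow> int" where
  "moebius_mu n = (if squarefree n then (-1) ^ card (prime_factors n) else 0)"

end

theory Submission imports Defs begin

lemma divsum_swap:
  fixes A :: "nat \<Rightarrow> nat \<Rightarrow> 'a::comm_monoid_add"
  assumes "n > 0"
  shows "(\<Sum>m | m dvd n. \<Sum>d | d dvd m. A d (m div d)) = (\<Sum>d | d dvd n. \<Sum>k | k dvd n div d. A d k)"
proof -
  let ?D = "{d. d dvd n}"
  have fin: "finite ?D" by (rule finite_divisors_nat[OF assms])
  have "(\<Sum>m | m dvd n. \<Sum>d | d dvd m. A d (m div d)) = (\<Sum>m\<in>?D. \<Sum>d\<in>{d\<in>?D. d dvd m}. A d (m div d))"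
    using fin by (intro sum.cong refl) (auto intro: dvd_trans)
  also have "\<dots> = (\<Sum>d\<in>?D. \<Sum>m\<in>{m\<in>?D. d dvd m}. A d (m div d))"
    by (rule sum.swap_restrict[OF fin fin])
  also have "\<dots> = (\<Sum>d | d dvd n. \<Sum>k | k dvd n div d. A d k)"
  proof (rule sum.cong[OF refl])
    fix d assume d: "d \<in> ?D"
    hence dpos: "d > 0" using assms by (auto intro: Nat.gr0I)
    have "{m\<in>?D. d dvd m} = (\<lambda>k. d * k) ` {k. k dvd n div d}"
    proof (intro equalityI subsetI)
      fix m assume "m \<in> {m\<in>?D. d dvd m}"
      then obtain k where "m = d * k" "d * k dvd n" by auto
      thus "m \<in> (\<lambda>k. d * k) ` {k. k dvd n div d}"
        using dpos by (auto intro!: image_eqI[of _ _ k] simp: dvd_div_iff_mult mult.commute)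
    next
      fix m assume "m \<in> (\<lambda>k. d * k) ` {k. k dvd n div d}"
      then obtain k where "m = d * k" "k dvd n div d" by auto
      thus "m \<in> {m\<in>?D. d dvd m}" using d dpos
        by (auto simp: dvd_div_iff_mult mult.commute)
    qed
    moreover have "inj_on (\<lambda>k. d * k) {k. k dvd n div d}" using dpos by (auto intro: inj_onI)
    ultimately show "(\<Sum>m\<in>{m\<in>?D. d dvd m}. A d (m div d)) = (\<Sum>k | k dvd n div d. A d k)"
      using dpos by (simp add: sum.reindex)
  qed
  finally show ?thesis .
qed

lemma div_div_dvd_nat: "(k::nat) dvd N \<Longrightarrow> N > 0 \<Longrightarrow> N div (N div k) = k \<and> N div k dvd N"
proof -
  assume "k dvd N" "N > 0"
  then obtain q where q: "N = k * q" by (auto elim: dvdE)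
  with \<open>N > 0\<close> have "k > 0" "q > 0" by auto
  with q show ?thesis by simp
qed

lemma divsum_flip:
  fixes \<phi> :: "nat \<Rightarrow> 'a::comm_monoid_add"
  assumes "N > 0"
  shows "(\<Sum>k | k dvd N. \<phi> (N div k)) = (\<Sum>k | k dvd N. \<phi> k)"
  by (rule sum.reindex_bij_witness[where i="\<lambda>k. N div k" and j="\<lambda>k. N div k"])
     (use assms div_div_dvd_nat in blast)+

lemma prod_primes_dvd:
  fixes S :: "nat set"
  assumes "S \<subseteq> prime_factors n" "n > 0"
  shows "\<Prod>S dvd n"
proof -
  have fin: "finite (prime_factors n)" by simp
  have "\<Prod>S dvd (\<Prod>p\<in>S. p ^ multiplicity p n)"
    using assms fin by (intro prod_dvd_prod) (auto simp: prime_factors_multiplicity intro: dvd_power)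
  also have "\<dots> dvd (\<Prod>p\<in>prime_factors n. p ^ multiplicity p n)"
    using assms fin by (intro prod_dvd_prod_subset) auto
  also have "\<dots> = n" using assms prod_prime_factors[of n] by simp
  finally show ?thesis .
qed

lemma squarefree_prod_primes:
  fixes S :: "nat set"
  assumes "finite S" "\<And>p. p \<in> S \<Longrightarrow> prime p"
  shows "squarefree (\<Prod>S)" "prime_factors (\<Prod>S) = S"
proof -
  show "squarefree (\<Prod>S)"
    using assms by (intro squarefree_prod_coprime) (auto intro: primes_coprime squarefree_prime)
  have "prime_factors (\<Prod>S) = \<Union>((prime_factors \<circ> (\<lambda>x. x)) ` S)"
    using assms by (intro prime_factors_prod) (auto dest: prime_gt_0_nat)
  also have "\<dots> = S" using assms by (auto simp: prime_prime_factors)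
  finally show "prime_factors (\<Prod>S) = S" .
qed

lemma squarefree_prod_prime_factors:
  fixes d :: nat
  assumes "squarefree d"
  shows "\<Prod>(prime_factors d) = d"
proof -
  have d0: "d \<noteq> 0" using assms by (cases "d = 0") auto
  have "\<Prod>(prime_factors d) = (\<Prod>p\<in>prime_factors d. p ^ multiplicity p d)"
  proof (rule prod.cong[OF refl])
    fix p assume "p \<in> prime_factors d"
    moreover have "\<forall>p\<in>prime_factors d. multiplicity p d = 1"
      using assms squarefree_factorial_semiring'[OF d0] by blast
    ultimately show "p = p ^ multiplicity p d" by simp
  qed
  also have "\<dots> = d" using prod_prime_factors[OF d0] by simp
  finally show ?thesis .
qed

lemma moebius_sum:
  assumes "N > 0"
  shows "(\<Sum>k | k dvd N. moebius_mu k) = (if N = 1 then 1 else 0)"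
proof -
  let ?P = "prime_factors N"
  have "(\<Sum>k | k dvd N. moebius_mu k) = (\<Sum>k | k dvd N \<and> squarefree k. (-1) ^ card (prime_factors k))"
    using assms by (intro sum.mono_neutral_cong_right) (auto simp: moebius_mu_def)
  also have "\<dots> = (\<Sum>S\<in>Pow ?P. (-1) ^ card S)"
  proof (rule sum.reindex_bij_witness[where j="\<lambda>k. prime_factors k" and i="\<lambda>S. \<Prod>S"])
    fix S assume S: "S \<in> Pow ?P"
    hence fin: "finite S" by (auto intro: finite_subset)
    have pr: "\<And>p. p \<in> S \<Longrightarrow> prime p" using S by auto
    show "prime_factors (\<Prod>S) = S" using squarefree_prod_primes[OF fin pr] by simp
    show "\<Prod>S \<in> {k. k dvd N \<and> squarefree k}"
      using squarefree_prod_primes[OF fin pr] prod_primes_dvd[of S N] S assms by auto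
  next
    fix k assume k: "k \<in> {k. k dvd N \<and> squarefree k}"
    show "\<Prod>(prime_factors k) = k" using k squarefree_prod_prime_factors by auto
    have "k \<noteq> 0" using k assms by auto
    then show "prime_factors k \<in> Pow ?P" using k assms by (auto simp: prime_factors_dvd intro: dvd_trans)
    show "(-1) ^ card (prime_factors k) = (-1 :: int) ^ card (prime_factors k)" by simp
  qed
  also have "\<dots> = (\<Prod>x\<in>?P. 1 - 1 :: int)"
    using prod_diff_conv_sum[of ?P "\<lambda>_. 1" "\<lambda>_. 1::int"] by simp
  also have "\<dots> = (if N = 1 then 1 else 0)"
  proof (cases "N = 1")
    case False
    then obtain p where "prime p" "p dvd N" using prime_factor_nat by blast
    hence "p \<in> ?P" using assms by (auto simp: prime_factors_dvd)
    then show ?thesis using False by (auto simp: card_gt_0_iff)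
  qed simp
  finally show ?thesis .
qed

lemma g_props:
  fixes f h :: "nat \<Rightarrow> complex"
  assumes L: "L_additive_wrt f h" and hnz: "\<And>m. m > 0 \<Longrightarrow> h m \<noteq> 0"
  shows "\<And>m n. m > 0 \<Longrightarrow> n > 0 \<Longrightarrow> f (m*n) / h (m*n) = f m / h m + f n / h n"
proof -
  fix m n :: nat assume mn: "m > 0" "n > 0"
  have hm: "h (m*n) = h m * h n" and fm: "f (m*n) = f m * h n + f n * h m"
    using L mn by (auto simp: L_additive_wrt_def completely_multiplicative_def)
  have "h m \<noteq> 0" "h n \<noteq> 0" using hnz mn by auto
  then show "f (m*n) / h (m*n) = f m / h m + f n / h n"
    by (simp add: hm fm field_simps)
qed

lemma f1_zero:
  fixes f h :: "nat \<Rightarrow> complex"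
  assumes L: "L_additive_wrt f h"
  shows "f 1 = 0"
proof -
  have h1: "h 1 = 1" using L by (simp add: L_additive_wrt_def completely_multiplicative_def)
  have A: "\<forall>m n. m > 0 \<longrightarrow> n > 0 \<longrightarrow> f (m*n) = f m * h n + f n * h m"
    using L unfolding L_additive_wrt_def by (rule conjunct2)
  have e: "f (1*1) = f 1 * h 1 + f 1 * h 1" using A[rule_format, of "1::nat" "1::nat", OF zero_less_one zero_less_one] .
  have "f 1 = f 1 + f 1" using e unfolding h1 by (simp only: mult_1 mult_1_right)
  thus "f 1 = 0" by (metis add_cancel_left_left)
qed

lemma g_prod_mset:
  fixes f h :: "nat \<Rightarrow> complex"
  assumes L: "L_additive_wrt f h" and hnz: "\<And>m. m > 0 \<Longrightarrow> h m \<noteq> 0"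
  shows "(\<And>x. x \<in># M \<Longrightarrow> x > 0) \<Longrightarrow> f (prod_mset M) / h (prod_mset M) = (\<Sum>p\<in>#M. f p / h p)"
proof (induction M)
  case empty
  have h1: "h 1 = 1" using L by (simp add: L_additive_wrt_def completely_multiplicative_def)
  have "f 1 = 0" using f1_zero[OF L] .
  then show ?case using h1 by simp
next
  case (add x M)
  have x0: "x > 0" using add.prems by simp
  have Mp: "\<And>y. y \<in># M \<Longrightarrow> y > 0" using add.prems by simp
  have "0 \<notin># M" using Mp by blast
  hence pM: "prod_mset M > 0" by (metis prod_mset_zero_iff gr0I)
  have "f (prod_mset (add_mset x M)) / h (prod_mset (add_mset x M))
        = f (x * prod_mset M) / h (x * prod_mset M)" by simp
  also have "\<dots> = f x / h x + f (prod_mset M) / h (prod_mset M)"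
    by (rule g_props[OF L hnz x0 pM])
  also have "\<dots> = f x / h x + (\<Sum>p\<in>#M. f p / h p)" using add.IH[OF Mp] by simp
  finally show ?case by simp
qed

lemma g_sum_mangoldt:
  fixes f h :: "nat \<Rightarrow> complex"
  assumes L: "L_additive_wrt f h" and hnz: "\<And>m. m > 0 \<Longrightarrow> h m \<noteq> 0" and n: "n > 0"
  shows "f n / h n = (\<Sum>d | d dvd n. gen_mangoldt f h d)"
proof -
  have "(\<Sum>d | d dvd n. gen_mangoldt f h d) = (\<Sum>d \<in> primepow_factors n. f (aprimedivisor d) / h (aprimedivisor d))"
    using n by (intro sum.mono_neutral_cong_right) (auto simp: primepow_factors_def gen_mangoldt_def)
  also have "\<dots> = (\<Sum>p\<in>#prime_factorization n. f p / h p)"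
    using n by (intro sum_prime_factorization_conv_sum_primepow_factors) auto
  also have "\<dots> = f (prod_mset (prime_factorization n)) / h (prod_mset (prime_factorization n))"
    by (rule g_prod_mset[OF L hnz, symmetric]) (auto dest: in_prime_factors_imp_prime prime_gt_0_nat)
  also have "\<dots> = f n / h n" using n by simp
  finally show ?thesis ..
qed

theorem theorem2p8:
  fixes f h :: "nat \<Rightarrow> complex" and n :: nat
  assumes "L_additive_wrt f h"
    and "\<And>m. m > 0 \<Longrightarrow> h m \<noteq> 0"
    and "n > 1"
  shows "gen_mangoldt f h n * f n / h n
           + (\<Sum>d | d dvd n. gen_mangoldt f h d * gen_mangoldt f h (n div d))
         = (\<Sum>d | d dvd n. of_int (moebius_mu (n div d)) * (f d / h d)^2)"
proof -
  note L = assms(1) and hnz = assms(2)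
  define g where "g d = f d / h d" for d
  define \<Lambda> where "\<Lambda> = gen_mangoldt f h"
  define F where "F m = \<Lambda> m * g m + (\<Sum>d | d dvd m. \<Lambda> d * \<Lambda> (m div d))" for m
  have gadd: "g (m * k) = g m + g k" if "m > 0" "k > 0" for m k
    using g_props[OF L hnz that] by (simp add: g_def)
  have gsum: "g m = (\<Sum>d | d dvd m. \<Lambda> d)" if "m > 0" for m
    using g_sum_mangoldt[OF L hnz that] by (simp add: g_def \<Lambda>_def)
  have sq: "g m ^ 2 = (\<Sum>e | e dvd m. F e)" if m: "m > 0" for m
  proof -
    have "g m ^ 2 = (\<Sum>d | d dvd m. \<Lambda> d * g m)"
      by (simp add: gsum[OF m] power2_eq_square sum_distrib_right)
    also have "\<dots> = (\<Sum>d | d dvd m. \<Lambda> d * g d + \<Lambda> d * (\<Sum>k | k dvd m div d. \<Lambda> k))"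
    proof (rule sum.cong[OF refl])
      fix d assume "d \<in> {d. d dvd m}"
      then obtain q where q: "m = d * q" by (auto elim: dvdE)
      with m have "d > 0" "q > 0" by auto
      with q show "\<Lambda> d * g m = \<Lambda> d * g d + \<Lambda> d * (\<Sum>k | k dvd m div d. \<Lambda> k)"
        using gadd gsum by (simp add: algebra_simps)
    qed
    also have "\<dots> = (\<Sum>d | d dvd m. \<Lambda> d * g d) + (\<Sum>d | d dvd m. \<Sum>k | k dvd m div d. \<Lambda> d * \<Lambda> k)"
      by (simp add: sum.distrib sum_distrib_left)
    also have "(\<Sum>d | d dvd m. \<Sum>k | k dvd m div d. \<Lambda> d * \<Lambda> k)
               = (\<Sum>e | e dvd m. \<Sum>d | d dvd e. \<Lambda> d * \<Lambda> (e div d))"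
      using divsum_swap[OF m, of "\<lambda>d k. \<Lambda> d * \<Lambda> k"] by simp
    finally show ?thesis by (simp add: F_def sum.distrib)
  qed
  have n0: "n > 0" using assms(3) by simp
  have "(\<Sum>d | d dvd n. of_int (moebius_mu (n div d)) * (f d / h d)^2)
        = (\<Sum>d | d dvd n. \<Sum>e | e dvd d. F e * of_int (moebius_mu (n div (e * (d div e)))))"
  proof (rule sum.cong[OF refl])
    fix d assume d: "d \<in> {d. d dvd n}"
    hence "d > 0" using n0 by (auto intro: Nat.gr0I)
    have "of_int (moebius_mu (n div d)) * (f d / h d)^2 = of_int (moebius_mu (n div d)) * (\<Sum>e | e dvd d. F e)"
      using sq[OF \<open>d > 0\<close>] by (simp add: g_def)
    also have "\<dots> = (\<Sum>e | e dvd d. of_int (moebius_mu (n div d)) * F e)"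
      by (rule sum_distrib_left)
    also have "\<dots> = (\<Sum>e | e dvd d. F e * of_int (moebius_mu (n div (e * (d div e)))))"
      by (rule sum.cong[OF refl]) (auto simp: mult.commute)
    finally show "of_int (moebius_mu (n div d)) * (f d / h d)^2
               = (\<Sum>e | e dvd d. F e * of_int (moebius_mu (n div (e * (d div e)))))" .
  qed
  also have "\<dots> = (\<Sum>e | e dvd n. \<Sum>k | k dvd n div e. F e * of_int (moebius_mu (n div (e * k))))"
    by (rule divsum_swap[OF n0])
  also have "\<dots> = (\<Sum>e | e dvd n. F e * of_int (\<Sum>k | k dvd n div e. moebius_mu (n div e div k)))"
    by (simp add: sum_distrib_left div_mult2_eq)
  also have "\<dots> = (\<Sum>e | e dvd n. F e * of_int (if n div e = 1 then 1 else 0))"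
  proof (rule sum.cong[OF refl])
    fix e assume e: "e \<in> {d. d dvd n}"
    hence pos: "n div e > 0" using n0 by (auto elim!: dvdE)
    show "F e * of_int (\<Sum>k | k dvd n div e. moebius_mu (n div e div k)) = F e * of_int (if n div e = 1 then 1 else 0)"
      using divsum_flip[OF pos, of moebius_mu] moebius_sum[OF pos] by simp
  qed
  also have "\<dots> = (\<Sum>e | e dvd n. if e = n then F e else 0)"
  proof (rule sum.cong[OF refl])
    fix e assume e: "e \<in> {d. d dvd n}"
    then obtain q where q: "n = e * q" by (auto elim: dvdE)
    with n0 have "e > 0" "q > 0" by auto
    with q have "n div e = 1 \<longleftrightarrow> e = n" by auto
    then show "F e * of_int (if n div e = 1 then 1 else 0) = (if e = n then F e else 0)" by simp
  qed
  also have "\<dots> = F n" using n0 by (simp add: sum.delta)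
  finally have eq: "(\<Sum>d | d dvd n. of_int (moebius_mu (n div d)) * (f d / h d)^2) = F n" .
  have Fn: "gen_mangoldt f h n * f n / h n
           + (\<Sum>d | d dvd n. gen_mangoldt f h d * gen_mangoldt f h (n div d)) = F n"
    unfolding F_def g_def \<Lambda>_def by simp
  show ?thesis by (rule trans[OF Fn eq[symmetric]])
qed

end
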